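(* Let $P$ be a poset on $\{1,\ldots,n\}$ and $k$ a field. The ideal $\mathcal{I}_P$ of the ring $R_P$ is a principal ideal if and only if $P$ satisfies the labelled-$\delta$-chain condition. Furthermore, in this case $\mathcal{I}_P$ is generated by $\mathbf{x}^{\delta}$, i.e. $f_{\min}=\delta$, where $f_{\min}\in\mathcal{A}(P)$ is the element with $f_{\min}+\mathcal{A}^{\mathrm{weak}}(P)=\mathcal{A}(P)$.
   Context: All posets are finite, on labels $\{1,\ldots,n\}$. $\mathcal{A}^{\mathrm{weak}}(P)$ is the set of maps $f:\{1,\ldots,n\}\to\mathbb{N}$ with $f(i)\ge f(j)$ whenever $i<_Pj$; $\mathcal{A}(P)\subseteq\mathcal{A}^{\mathrm{weak}}(P)$ consists of those $f$ with additionally $f(i)>f(j)$ whenever $i<_Pj$ and $i>j$ as integers. $R_P\subseteq k[x_1,\ldots,x_n]$ is the span of $\mathbf{x}^f=\prod_ix_i^{f(i)}$, $f\in\mathcal{A}^{\mathrm{weak}}(P)$, and $\mathcal{I}_P$ is the ideal of $R_P$ spanned by $\mathbf{x}^f$, $f\in\mathcal{A}(P)$; $\mathcal{I}_P$ is principal if and only if there is $f_{\min}\in\mathcal{A}(P)$ with $f_{\min}+\mathcal{A}^{\mathrm{weak}}(P)=\mathcal{A}(P)$. A covering relation $i\lessdot_Pj$ is strict if $i>j$ as integers. $\delta(i)$ is the maximum, over all saturated chains in $P_{\ge i}$ starting at $i$, of the number of strict covering relations in the chain. $P$ satisfies the labelled-$\delta$-chain condition if for every $i$, all saturated chains from $i$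 to a maximal element of $P_{\ge i}$ have the same number $\delta(i)$ of strict covering relations. *)

theory Defs
  imports Main "HOL-Library.Poly_Mapping"
begin

definition is_poset :: "nat \<Rightarrow> (nat \<Rightarrow> nat \<Rightarrow> bool) \<Rightarrow> bool" where
  "is_poset n lt \<longleftrightarrow>
     (\<forall>i j. lt i j \<longrightarrow> i \<in> {1..n} \<and> j \<in> {1..n}) \<and>
     (\<forall>i. \<not> lt i i) \<and>
     (\<forall>i j k. lt i j \<longrightarrow> lt j k \<longrightarrow> lt i k)"

definition A_weak :: "nat \<Rightarrow> (nat \<Rightarrow> nat \<Rightarrow> bool) \<Rightarrow> (nat \<Rightarrow>\<^sub>0 nat) set" where
  "A_weak n lt = {f. Poly_Mapping.keys f \<subseteq> {1..n} \<and>
                     (\<forall>i j. lt i j \<longrightarrow> Poly_Mapping.lookup f i \<ge> Poly_Mapping.lookup f j)}"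

definition A_strict :: "nat \<Rightarrow> (nat \<Rightarrow> nat \<Rightarrow> bool) \<Rightarrow> (nat \<Rightarrow>\<^sub>0 nat) set" where
  "A_strict n lt = {f. f \<in> A_weak n lt \<and>
                     (\<forall>i j. lt i j \<longrightarrow> i > j \<longrightarrow> Poly_Mapping.lookup f i > Poly_Mapping.lookup f j)}"

text \<open>Polynomials over k in the variables x_i: maps from exponent vectors to coefficients.
  The monomial x^f.\<close>
definition xmon :: "(nat \<Rightarrow>\<^sub>0 nat) \<Rightarrow> ((nat \<Rightarrow>\<^sub>0 nat) \<Rightarrow>\<^sub>0 'k::field)" where
  "xmon f = Poly_Mapping.single f 1"

definition R_P :: "nat \<Rightarrow> (nat \<Rightarrow> nat \<Rightarrow> bool) \<Rightarrow> ((nat \<Rightarrow>\<^sub>0 nat) \<Rightarrow>\<^sub>0 'k::field) set" where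
  "R_P n lt = {p. Poly_Mapping.keys p \<subseteq> A_weak n lt}"

definition I_P :: "nat \<Rightarrow> (nat \<Rightarrow> nat \<Rightarrow> bool) \<Rightarrow> ((nat \<Rightarrow>\<^sub>0 nat) \<Rightarrow>\<^sub>0 'k::field) set" where
  "I_P n lt = {p. Poly_Mapping.keys p \<subseteq> A_strict n lt}"

definition principal_in :: "'a::comm_ring_1 set \<Rightarrow> 'a set \<Rightarrow> bool" where
  "principal_in R I \<longleftrightarrow> (\<exists>g\<in>R. I = (\<lambda>r. g * r) ` R)"

definition covers :: "(nat \<Rightarrow> nat \<Rightarrow> bool) \<Rightarrow> nat \<Rightarrow> nat \<Rightarrow> bool" where
  "covers lt i j \<longleftrightarrow> lt i j \<and> \<not> (\<exists>k. lt i k \<and> lt k j)"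

definition sat_chain :: "(nat \<Rightarrow> nat \<Rightarrow> bool) \<Rightarrow> nat list \<Rightarrow> bool" where
  "sat_chain lt c \<longleftrightarrow> c \<noteq> [] \<and>
     (\<forall>k. Suc k < length c \<longrightarrow> covers lt (c ! k) (c ! Suc k))"

definition n_strict :: "nat list \<Rightarrow> nat" where
  "n_strict c = card {k. Suc k < length c \<and> c ! k > c ! Suc k}"

definition delta :: "nat \<Rightarrow> (nat \<Rightarrow> nat \<Rightarrow> bool) \<Rightarrow> nat \<Rightarrow> nat" where
  "delta n lt i = (if i \<in> {1..n}
     then Max {n_strict c | c. sat_chain lt c \<and> hd c = i} else 0)"

definition delta_pm :: "nat \<Rightarrow> (nat \<Rightarrow> nat \<Rightarrow> bool) \<Rightarrow> (nat \<Rightarrow>\<^sub>0 nat)" where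
  "delta_pm n lt = Abs_poly_mapping (delta n lt)"

definition labelled_delta_chain :: "nat \<Rightarrow> (nat \<Rightarrow> nat \<Rightarrow> bool) \<Rightarrow> bool" where
  "labelled_delta_chain n lt \<longleftrightarrow>
     (\<forall>i\<in>{1..n}. \<forall>c. sat_chain lt c \<and> hd c = i \<and> (\<forall>j. \<not> lt (last c) j)
        \<longrightarrow> n_strict c = delta n lt i)"

end

theory Submission
  imports Defs
begin


fun cp :: "(nat \<Rightarrow> nat \<Rightarrow> bool) \<Rightarrow> nat list \<Rightarrow> bool" where
  "cp lt [] = False" | "cp lt [x] = True" | "cp lt (x#y#c) = (covers lt x y \<and> cp lt (y#c))"

fun ns :: "nat list \<Rightarrow> nat" where
  "ns [] = 0" | "ns [x] = 0" | "ns (x#y#c) = (if y < x then 1 else 0) + ns (y#c)"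

lemma sat_chain_cp: "sat_chain lt c = cp lt c"
proof (induction lt c rule: cp.induct)
  case (1 lt) then show ?case by (simp add: sat_chain_def)
next
  case (2 lt x) then show ?case by (simp add: sat_chain_def)
next
  case (3 lt x y c)
  have "sat_chain lt (x#y#c) \<longleftrightarrow> covers lt x y \<and> sat_chain lt (y#c)"
    unfolding sat_chain_def
    apply (rule iffI)
     apply (intro conjI)
       apply (metis Suc_less_eq length_Cons nth_Cons_0 nth_Cons_Suc zero_less_Suc)
      apply simp
     apply (metis Suc_less_eq length_Cons nth_Cons_Suc)
    apply (clarsimp)
    apply (case_tac k) apply auto
    done
  then show ?case using 3 by simp
qed

lemma set_split0: "{k::nat. P k} = {k. k = 0 \<and> P 0} \<union> Suc ` {k. P (Suc k)}"
  by (rule set_eqI) (case_tac x; auto)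

lemma n_strict_ns: "n_strict c = ns c"
proof (induction c rule: ns.induct)
  case 1 then show ?case by (simp add: n_strict_def)
next
  case (2 x) then show ?case by (simp add: n_strict_def)
next
  case (3 x y c)
  let ?P = "\<lambda>k. Suc k < length (x#y#c) \<and> (x#y#c) ! k > (x#y#c) ! Suc k"
  have fin: "finite {k. ?P (Suc k)}" by (rule finite_subset[of _ "{..<length (x#y#c)}"]) auto
  have e: "{k. ?P (Suc k)} = {k. Suc k < length (y#c) \<and> (y#c) ! k > (y#c) ! Suc k}" by auto
  have "n_strict (x#y#c) = card ({k::nat. k = 0 \<and> ?P 0} \<union> Suc ` {k. ?P (Suc k)})"
    unfolding n_strict_def by (subst set_split0) rule
  also have "\<dots> = card {k::nat. k = 0 \<and> ?P 0} + card (Suc ` {k. ?P (Suc k)})"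
    by (rule card_Un_disjoint) (use fin in auto)
  also have "card (Suc ` {k. ?P (Suc k)}) = n_strict (y#c)"
    by (subst card_image) (auto simp: n_strict_def e)
  also have "card {k::nat. k = 0 \<and> ?P 0} = (if y < x then 1 else 0)"
    by auto
  finally show ?case using 3 by simp
qed

lemma ns_zero_le: "c \<noteq> [] \<Longrightarrow> ns c = 0 \<Longrightarrow> hd c \<le> last c"
  by (induction c rule: ns.induct) (auto split: if_splits)

lemma cp_cons: "cp lt (x#c) \<Longrightarrow> c \<noteq> [] \<Longrightarrow> cp lt c"
  by (cases c) auto

lemma cp_app: "cp lt xs \<Longrightarrow> xs \<noteq> [] \<Longrightarrow> cp lt (last xs # p2) \<Longrightarrow> cp lt (xs @ p2)"
  by (induction lt xs rule: cp.induct) auto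

lemma cover_mono_path:
  assumes "\<And>a b. covers lt a b \<Longrightarrow> g b \<le> (g a :: nat)"
  shows "cp lt c \<Longrightarrow> g (last c) \<le> g (hd c)"
  by (induction c rule: induct_list012) (use assms in \<open>auto intro: order_trans\<close>)

lemma cover_smono_path:
  assumes "\<And>a b. covers lt a b \<Longrightarrow> g b + (if b < a then 1 else 0) \<le> (g a :: nat)"
  shows "cp lt c \<Longrightarrow> g (last c) + ns c \<le> g (hd c)"
proof (induction c rule: induct_list012)
  case (3 x y c)
  then show ?case using assms[of x y] by auto
qed auto

locale poset =
  fixes n :: nat and lt :: "nat \<Rightarrow> nat \<Rightarrow> bool"
  assumes P: "is_poset n lt"
begin

lemma lt_dom: "lt i j \<Longrightarrow> i \<in> {1..n} \<and> j \<in> {1..n}"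
  using P unfolding is_poset_def by blast
lemma lt_irr: "\<not> lt i i"
  using P unfolding is_poset_def by blast
lemma lt_trans: "lt i j \<Longrightarrow> lt j k \<Longrightarrow> lt i k"
  using P unfolding is_poset_def by blast

lemma cp_hd_lt: "cp lt (x#c) \<Longrightarrow> z \<in> set c \<Longrightarrow> lt x z"
proof (induction c arbitrary: x)
  case Nil then show ?case by simp
next
  case (Cons y c)
  then have "covers lt x y" "cp lt (y#c)" by auto
  then show ?case using Cons lt_trans unfolding covers_def by auto
qed

lemma cp_distinct: "cp lt c \<Longrightarrow> distinct c"
proof (induction c)
  case Nil then show ?case by simp
next
  case (Cons x c)
  then show ?case using cp_hd_lt[of x c x] lt_irr cp_cons by (cases "c = []") auto
qed

lemma cp_set: "cp lt c \<Longrightarrow> set c \<subseteq> insert (hd c) {1..n}"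
proof (cases c)
  case (Cons a l)
  assume c: "cp lt c"
  show ?thesis
  proof
    fix z assume "z \<in> set c"
    then show "z \<in> insert (hd c) {1..n}" using cp_hd_lt[of a l z] lt_dom c Cons by auto
  qed
qed auto

lemma fin_chains: "finite {c. cp lt c \<and> hd c = x}"
proof (rule finite_subset)
  show "{c. cp lt c \<and> hd c = x} \<subseteq> {c. set c \<subseteq> insert x {1..n} \<and> length c \<le> card (insert x {1..n})}"
  proof clarify
    fix c assume c: "cp lt c" "x = hd c"
    then have s: "set c \<subseteq> insert x {1..n}" using cp_set by auto
    have "length c = card (set c)" using cp_distinct[OF c(1)] by (simp add: distinct_card)
    also have "\<dots> \<le> card (insert x {1..n})" by (rule card_mono) (use s in auto)
    finally show "set c \<subseteq> insert (hd c) {1..n} \<and> length c \<le> card (insert (hd c) {1..n})" using s c by simp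
  qed
  show "finite {c. set c \<subseteq> insert x {1..n} \<and> length c \<le> card (insert x {1..n})}"
    by (rule finite_lists_length_le) simp
qed

definition Mx :: "(nat list \<Rightarrow> nat) \<Rightarrow> nat \<Rightarrow> nat" where
  "Mx \<beta> x = (if x \<in> {1..n} then Max ((\<lambda>c. ns c + \<beta> c) ` {c. cp lt c \<and> hd c = x}) else 0)"

lemma G1: "x \<in> {1..n} \<Longrightarrow> cp lt c \<Longrightarrow> hd c = x \<Longrightarrow> ns c + \<beta> c \<le> Mx \<beta> x"
  unfolding Mx_def using fin_chains by (auto intro!: Max_ge)

lemma G2: "x \<in> {1..n} \<Longrightarrow> \<exists>c. cp lt c \<and> hd c = x \<and> Mx \<beta> x = ns c + \<beta> c"
proof -
  assume x: "x \<in> {1..n}"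
  have "[x] \<in> {c. cp lt c \<and> hd c = x}" by simp
  then have ne: "{c. cp lt c \<and> hd c = x} \<noteq> {}" by blast
  have "Mx \<beta> x \<in> (\<lambda>c. ns c + \<beta> c) ` {c. cp lt c \<and> hd c = x}"
    unfolding Mx_def using x fin_chains ne by (simp del: ns.simps)
  then show ?thesis by auto
qed

lemma G3:
  assumes mono: "\<And>x c. \<beta> c \<le> \<beta> (x#c)" and cov: "covers lt x y"
  shows "Mx \<beta> y + (if y < x then 1 else 0) \<le> Mx \<beta> x"
proof -
  have xy: "x \<in> {1..n}" "y \<in> {1..n}" using cov lt_dom unfolding covers_def by auto
  obtain c where c: "cp lt c" "hd c = y" "Mx \<beta> y = ns c + \<beta> c" using G2[OF xy(2)] by blast
  obtain c' where c': "c = y # c'" using c by (cases c) auto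
  have "cp lt (x#c)" using c c' cov by simp
  moreover have "ns (x#c) = (if y < x then 1 else 0) + ns c" using c' by simp
  ultimately show ?thesis using G1[OF xy(1), of "x#c" \<beta>] mono[of c x] c by simp
qed

lemma path_ex_aux:
  "card {z. lt x z \<and> lt z y} = m \<Longrightarrow> lt x y \<Longrightarrow> \<exists>p. cp lt (x#p) \<and> p \<noteq> [] \<and> last p = y"
proof (induction m arbitrary: x y rule: less_induct)
  case (less m)
  show ?case
  proof (cases "covers lt x y")
    case True then show ?thesis by (intro exI[of _ "[y]"]) simp
  next
    case False
    then obtain z where z: "lt x z" "lt z y" using less.prems unfolding covers_def by auto
    have fin: "\<And>a b. finite {w. lt a w \<and> lt w b}"
      by (rule finite_subset[of _ "{1..n}"]) (auto dest: lt_dom)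
    have "card {w. lt x w \<and> lt w z} < m"
      unfolding less.prems(1)[symmetric]
      by (rule psubset_card_mono[OF fin]) (use z lt_trans lt_irr in blast)
    then obtain p1 where p1: "cp lt (x#p1)" "p1 \<noteq> []" "last p1 = z"
      using less.IH z(1) by blast
    have "card {w. lt z w \<and> lt w y} < m"
      unfolding less.prems(1)[symmetric]
      by (rule psubset_card_mono[OF fin]) (use z lt_trans lt_irr in blast)
    then obtain p2 where p2: "cp lt (z#p2)" "p2 \<noteq> []" "last p2 = y"
      using less.IH z(2) by blast
    have "cp lt ((x#p1) @ p2)" using cp_app[OF p1(1)] p1 p2 by simp
    then show ?thesis using p1 p2 by (intro exI[of _ "p1 @ p2"]) auto
  qed
qed

lemma path_ex: "lt x y \<Longrightarrow> \<exists>p. cp lt (x#p) \<and> p \<noteq> [] \<and> last p = y"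
  using path_ex_aux by blast

lemma cover_mono_lt:
  assumes "\<And>a b. covers lt a b \<Longrightarrow> g b \<le> (g a :: nat)" "lt x y"
  shows "g y \<le> g x"
proof -
  obtain p where "cp lt (x#p)" "p \<noteq> []" "last p = y" using path_ex assms(2) by blast
  then show ?thesis using cover_mono_path[OF assms(1), where c="x#p"] by simp
qed

lemma cover_smono_lt:
  assumes "\<And>a b. covers lt a b \<Longrightarrow> g b + (if b < a then 1 else 0) \<le> (g a :: nat)" "lt x y"
  shows "g y + (if y < x then 1 else 0) \<le> g x"
proof -
  obtain p where p: "cp lt (x#p)" "p \<noteq> []" "last p = y" using path_ex assms(2) by blast
  have h: "g y + ns (x#p) \<le> g x" using cover_smono_path[OF assms(1) p(1)] p by simp
  have "y < x \<Longrightarrow> ns (x#p) \<ge> 1" using ns_zero_le[of "x#p"] p by fastforce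
  then show ?thesis using h by (cases "y < x") auto
qed

lemma max_ext_aux: "card {z. lt x z} = m \<Longrightarrow> \<exists>c. cp lt c \<and> hd c = x \<and> (\<forall>j. \<not> lt (last c) j)"
proof (induction m arbitrary: x rule: less_induct)
  case (less m)
  show ?case
  proof (cases "\<exists>j. lt x j")
    case False then show ?thesis by (intro exI[of _ "[x]"]) auto
  next
    case True
    then obtain j where "lt x j" by blast
    then obtain p where p: "cp lt (x#p)" "p \<noteq> []" using path_ex by blast
    then obtain y p' where yp: "p = y # p'" by (cases p) auto
    then have cov: "covers lt x y" using p by simp
    have fin: "finite {z. lt x z}" by (rule finite_subset[of _ "{1..n}"]) (auto dest: lt_dom)
    have "card {z. lt y z} < m" unfolding less.prems[symmetric]
      by (rule psubset_card_mono[OF fin]) (use cov lt_trans lt_irr in \<open>auto simp: covers_def\<close>)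
    then obtain c where c: "cp lt c" "hd c = y" "\<forall>j. \<not> lt (last c) j" using less.IH by blast
    then obtain c' where "c = y # c'" by (cases c) auto
    then show ?thesis using c cov by (intro exI[of _ "x#c"]) auto
  qed
qed

lemma max_ext: "\<exists>c. cp lt c \<and> hd c = x \<and> (\<forall>j. \<not> lt (last c) j)"
  using max_ext_aux by blast


abbreviation D where "D \<equiv> Mx (\<lambda>_. 0)"

lemma delta_eq: "delta n lt = D"
proof
  fix i
  have "{n_strict c | c. sat_chain lt c \<and> hd c = i} = (\<lambda>c. ns c + 0) ` {c. cp lt c \<and> hd c = i}"
    by (auto simp: sat_chain_cp n_strict_ns)
  then show "delta n lt i = D i" unfolding delta_def Mx_def by simp
qed

lemma D_cov: "covers lt x y \<Longrightarrow> D y + (if y < x then 1 else 0) \<le> D x"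
  by (rule G3) auto

lemma D_lt: "lt x y \<Longrightarrow> D y + (if y < x then 1 else 0) \<le> D x"
  by (rule cover_smono_lt[OF D_cov])

lemma D_min:
  assumes g: "\<And>x y. lt x y \<Longrightarrow> g y + (if y < x then 1 else 0) \<le> (g x :: nat)"
  shows "D x \<le> g x"
proof (cases "x \<in> {1..n}")
  case True
  obtain c where c: "cp lt c" "hd c = x" "D x = ns c + 0" using G2[OF True] by blast
  have "g (last c) + ns c \<le> g (hd c)"
    by (rule cover_smono_path[OF _ c(1)]) (use g in \<open>auto simp: covers_def\<close>)
  then show ?thesis using c by simp
next
  case False then show ?thesis by (auto simp: Mx_def)
qed

lemma D_max: "\<forall>j. \<not> lt m j \<Longrightarrow> D m = 0"
proof (cases "m \<in> {1..n}")
  case True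
  assume mx: "\<forall>j. \<not> lt m j"
  obtain c where c: "cp lt c" "hd c = m" "D m = ns c + 0" using G2[OF True] by blast
  have "c = [m]"
  proof (cases c rule: remdups_adj.cases)
    case (3 x y xs) then show ?thesis using c mx by (auto simp: covers_def)
  qed (use c in auto)
  then show ?thesis using c by simp
qed (auto simp: Mx_def)

definition LDC' where
  "LDC' \<longleftrightarrow> (\<forall>i\<in>{1..n}. \<forall>c. cp lt c \<and> hd c = i \<and> (\<forall>j. \<not> lt (last c) j) \<longrightarrow> ns c = D i)"

lemma LDC_eq: "labelled_delta_chain n lt \<longleftrightarrow> LDC'"
  unfolding labelled_delta_chain_def LDC'_def by (simp add: sat_chain_cp n_strict_ns delta_eq)

lemma LDC_cov:
  assumes L: LDC' and cov: "covers lt a b"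
  shows "D a = D b + (if b < a then 1 else 0)"
proof -
  have ab: "a \<in> {1..n}" "b \<in> {1..n}" using cov lt_dom unfolding covers_def by auto
  obtain c where c: "cp lt c" "hd c = b" "\<forall>j. \<not> lt (last c) j" using max_ext by blast
  obtain c' where c': "c = b # c'" using c by (cases c) auto
  have e1: "ns c = D b" using L c ab unfolding LDC'_def by blast
  have "cp lt (a#c)" using c c' cov by simp
  moreover have "last (a#c) = last c" using c' by simp
  ultimately have e2: "ns (a#c) = D a" using L[unfolded LDC'_def, rule_format, of a "a#c"] c ab by auto
  have "ns (a#c) = (if b < a then 1 else 0) + ns c" using c' by simp
  then show ?thesis using e1 e2 by simp
qed

lemma cov_LDC:
  assumes E: "\<And>a b. covers lt a b \<Longrightarrow> D a = D b + (if b < a then 1 else 0)"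
  shows LDC'
proof -
  have chain: "cp lt c \<Longrightarrow> D (hd c) = D (last c) + ns c" for c
  proof (induction c rule: induct_list012)
    case (3 x y zs)
    then have "covers lt x y" "cp lt (y#zs)" by auto
    then show ?case using 3 E[of x y] by auto
  qed auto
  show ?thesis unfolding LDC'_def
  proof (intro ballI allI impI)
    fix i c assume "cp lt c \<and> hd c = i \<and> (\<forall>j. \<not> lt (last c) j)"
    then show "ns c = D i" using chain[of c] D_max[of "last c"] by auto
  qed
qed

lemma LDC_fail: "\<not> LDC' \<Longrightarrow> \<exists>a b. covers lt a b \<and> D b + (if b < a then 1 else 0) < D a"
proof (rule ccontr)
  assume "\<not> LDC'" "\<not> (\<exists>a b. covers lt a b \<and> D b + (if b < a then 1 else 0) < D a)"
  then have "\<And>a b. covers lt a b \<Longrightarrow> D a = D b + (if b < a then 1 else 0)"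
  proof -
    fix a b assume "covers lt a b"
    then show "D a = D b + (if b < a then 1 else 0)"
      using D_cov[of a b] \<open>\<not> (\<exists>a b. _)\<close> by force
  qed
  then show False using cov_LDC \<open>\<not> LDC'\<close> by blast
qed

lemma LDC_weak:
  assumes L: LDC' and g: "\<And>x y. lt x y \<Longrightarrow> g y + (if y < x then 1 else 0) \<le> (g x :: nat)"
    and xy: "lt x y"
  shows "g y - D y \<le> g x - D x"
proof (rule cover_mono_lt[OF _ xy])
  fix a b assume cov: "covers lt a b"
  have "D a = D b + (if b < a then 1 else 0)" by (rule LDC_cov[OF L cov])
  moreover have "g b + (if b < a then 1 else 0) \<le> g a" using g cov by (simp add: covers_def)
  moreover have "D b \<le> g b" by (rule D_min[OF g])
  ultimately show "g b - D b \<le> g a - D a" by auto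
qed

lemma F_constr:
  assumes cov: "covers lt a b" and lt: "D b + (if b < a then 1 else 0) < D a"
  shows "\<exists>F. (\<forall>x. x \<notin> {1..n} \<longrightarrow> F x = 0) \<and> (\<forall>x y. lt x y \<longrightarrow> F y + (if y < x then 1 else 0) \<le> F x)
           \<and> F a \<le> D a \<and> D b + 1 \<le> F b"
proof -
  define \<beta> :: "nat list \<Rightarrow> nat" where "\<beta> c = (if b \<in> set c then 1 else 0)" for c
  have mono: "\<And>x c. \<beta> c \<le> \<beta> (x#c)" unfolding \<beta>_def by auto
  have ab: "a \<in> {1..n}" "b \<in> {1..n}" using cov lt_dom unfolding covers_def by auto
  have F1: "\<forall>x. x \<notin> {1..n} \<longrightarrow> Mx \<beta> x = 0" by (simp add: Mx_def)
  have F2: "\<forall>x y. lt x y \<longrightarrow> Mx \<beta> y + (if y < x then 1 else 0) \<le> Mx \<beta> x"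
    using cover_smono_lt[OF G3[OF mono]] by blast
  have F3: "Mx \<beta> a \<le> D a"
  proof -
    obtain c where c: "cp lt c" "hd c = a" "Mx \<beta> a = ns c + \<beta> c" using G2[OF ab(1)] by blast
    have nsD: "ns c + 0 \<le> D a" by (rule G1[OF ab(1) c(1) c(2)])
    show ?thesis
    proof (cases "b \<in> set c")
      case False then show ?thesis using c nsD by (simp add: \<beta>_def)
    next
      case True
      obtain c' where c': "c = a # c'" using c by (cases c) auto
      have "b \<noteq> a" using cov lt_irr by (auto simp: covers_def)
      then have "b \<in> set c'" using True c' by simp
      then obtain y c'' where yc: "c' = y # c''" by (cases c') auto
      have cy: "covers lt a y" "cp lt (y#c'')" using c c' yc by auto
      have "y = b"
      proof (rule ccontr)
        assume "y \<noteq> b"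
        then have "lt y b" using \<open>b \<in> set c'\<close> yc cp_hd_lt[OF cy(2)] by auto
        then show False using cov cy(1) by (auto simp: covers_def)
      qed
      have "ns (b # c'') + 0 \<le> D b" by (rule G1[OF ab(2)]) (use cy \<open>y = b\<close> in auto)
      moreover have "ns c = (if b < a then 1 else 0) + ns (b # c'')" using c' yc \<open>y = b\<close> by simp
      ultimately show ?thesis using c True lt by (simp add: \<beta>_def)
    qed
  qed
  have F4: "D b + 1 \<le> Mx \<beta> b"
  proof -
    obtain c where c: "cp lt c" "hd c = b" "D b = ns c + 0" using G2[OF ab(2)] by blast
    have "b \<in> set c" using c by (cases c) auto
    then show ?thesis using G1[OF ab(2) c(1) c(2), of \<beta>] c by (simp add: \<beta>_def)
  qed
  show ?thesis using F1 F2 F3 F4 by blast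
qed

end



lemma lookup_single_if: "Poly_Mapping.lookup (Poly_Mapping.single k v) i = (if k = i then v else 0)"
  by (simp add: lookup_single when_def)

lemma pm_sum: "p = (\<Sum>k\<in>Poly_Mapping.keys p. Poly_Mapping.single k (Poly_Mapping.lookup p k))"
proof (rule poly_mapping_eqI)
  fix i
  show "Poly_Mapping.lookup p i = Poly_Mapping.lookup (\<Sum>k\<in>Poly_Mapping.keys p. Poly_Mapping.single k (Poly_Mapping.lookup p k)) i"
    by (simp add: lookup_sum lookup_single_if in_keys_iff)
qed

lemma pw_le_lex:
  fixes p q :: "nat \<Rightarrow>\<^sub>0 nat"
  assumes "\<And>i. Poly_Mapping.lookup p i \<le> Poly_Mapping.lookup q i"
  shows "p \<le> q"
  using assms
proof transfer
  fix f g :: "nat \<Rightarrow> nat"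
  assume le: "\<And>i. f i \<le> g i"
  show "less_fun f g \<or> f = g"
  proof (cases "f = g")
    case False
    then obtain k0 where "f k0 \<noteq> g k0" by auto
    define k where "k = (LEAST k. f k \<noteq> g k)"
    have "f k \<noteq> g k" unfolding k_def by (rule LeastI) fact
    moreover have "\<forall>k'<k. f k' = g k'" unfolding k_def using not_less_Least by blast
    ultimately have "less_fun f g" using le[of k] unfolding less_fun_def
      by (intro exI[of _ k]) auto
    then show ?thesis by simp
  qed simp
qed

lemma max_coeff:
  fixes g r :: "(nat \<Rightarrow>\<^sub>0 nat) \<Rightarrow>\<^sub>0 'k::field"
  assumes "g \<noteq> 0" "r \<noteq> 0"
  shows "Poly_Mapping.lookup (g * r) (Max (Poly_Mapping.keys g) + Max (Poly_Mapping.keys r)) = Poly_Mapping.lookup g (Max (Poly_Mapping.keys g)) * Poly_Mapping.lookup r (Max (Poly_Mapping.keys r))"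
proof -
  let ?G = "Poly_Mapping.keys g" and ?H = "Poly_Mapping.keys r"
  have fG: "finite ?G" "?G \<noteq> {}" "finite ?H" "?H \<noteq> {}" using assms by auto
  have "g * r = (\<Sum>a\<in>?G. Poly_Mapping.single a (Poly_Mapping.lookup g a)) * (\<Sum>b\<in>?H. Poly_Mapping.single b (Poly_Mapping.lookup r b))"
    by (subst (1) pm_sum[of g], subst (1) pm_sum[of r]) rule
  also have "\<dots> = (\<Sum>a\<in>?G. \<Sum>b\<in>?H. Poly_Mapping.single (a + b) (Poly_Mapping.lookup g a * Poly_Mapping.lookup r b))"
    by (simp add: sum_product mult_single)
  finally have gr: "g * r = \<dots>" .
  have iff: "a + b = Max ?G + Max ?H \<longleftrightarrow> a = Max ?G \<and> b = Max ?H" if "a \<in> ?G" "b \<in> ?H" for a b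
  proof
    assume e: "a + b = Max ?G + Max ?H"
    have la: "a \<le> Max ?G" and lb: "b \<le> Max ?H" using that fG by auto
    show "a = Max ?G \<and> b = Max ?H"
    proof (rule ccontr)
      assume "\<not> (a = Max ?G \<and> b = Max ?H)"
      then have "a < Max ?G \<or> b < Max ?H" using la lb by auto
      then have "a + b < Max ?G + Max ?H"
        using la lb by (auto intro: add_less_le_mono add_le_less_mono)
      then show False using e by simp
    qed
  qed simp
  have "Poly_Mapping.lookup (g * r) (Max ?G + Max ?H) =
      (\<Sum>a\<in>?G. \<Sum>b\<in>?H. if a = Max ?G \<and> b = Max ?H then Poly_Mapping.lookup g a * Poly_Mapping.lookup r b else 0)"
    unfolding gr lookup_sum lookup_single_if
    by (intro sum.cong refl) (use iff in auto)
  also have "\<dots> = (\<Sum>a\<in>?G. if a = Max ?G then Poly_Mapping.lookup g a * Poly_Mapping.lookup r (Max ?H) else 0)"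
    by (intro sum.cong refl) (use fG in \<open>auto simp: sum.delta'\<close>)
  also have "\<dots> = Poly_Mapping.lookup g (Max ?G) * Poly_Mapping.lookup r (Max ?H)"
    using fG by (simp add: sum.delta')
  finally show ?thesis .
qed

lemma keys_xmon: "Poly_Mapping.keys (xmon d :: (nat \<Rightarrow>\<^sub>0 nat) \<Rightarrow>\<^sub>0 'k::field) = {d}"
  by (simp add: xmon_def)

lemma keys_xmon_mult:
  "Poly_Mapping.keys ((xmon d :: (nat \<Rightarrow>\<^sub>0 nat) \<Rightarrow>\<^sub>0 'k::field) * r) \<subseteq> (\<lambda>k. d + k) ` Poly_Mapping.keys r"
  using keys_mult[of "xmon d" r] by (auto simp: keys_xmon)

context poset begin

abbreviation dl where "dl \<equiv> delta_pm n lt"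

lemma fin_D: "finite {x. D x \<noteq> 0}"
  by (rule finite_subset[of _ "{1..n}"]) (auto simp: Mx_def split: if_splits)

lemma lookup_dl: "Poly_Mapping.lookup dl = D"
  unfolding delta_pm_def delta_eq using fin_D by simp

lemma A_strict_iff: "f \<in> A_strict n lt \<longleftrightarrow> Poly_Mapping.keys f \<subseteq> {1..n} \<and>
   (\<forall>x y. lt x y \<longrightarrow> Poly_Mapping.lookup f y + (if y < x then 1 else 0) \<le> Poly_Mapping.lookup f x)"
proof -
  have "(\<forall>i j. lt i j \<longrightarrow> Poly_Mapping.lookup f j \<le> Poly_Mapping.lookup f i) \<and> (\<forall>i j. lt i j \<longrightarrow> j < i \<longrightarrow> Poly_Mapping.lookup f j < Poly_Mapping.lookup f i)
     \<longleftrightarrow> (\<forall>x y. lt x y \<longrightarrow> Poly_Mapping.lookup f y + (if y < x then 1 else 0) \<le> Poly_Mapping.lookup f x)"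
  proof (intro iffI conjI allI impI)
    fix x y assume "(\<forall>i j. lt i j \<longrightarrow> Poly_Mapping.lookup f j \<le> Poly_Mapping.lookup f i) \<and> (\<forall>i j. lt i j \<longrightarrow> j < i \<longrightarrow> Poly_Mapping.lookup f j < Poly_Mapping.lookup f i)"
      "lt x y"
    then have "Poly_Mapping.lookup f y \<le> Poly_Mapping.lookup f x" "y < x \<Longrightarrow> Poly_Mapping.lookup f y < Poly_Mapping.lookup f x" by blast+
    then show "Poly_Mapping.lookup f y + (if y < x then 1 else 0) \<le> Poly_Mapping.lookup f x" by (cases "y < x") auto
  next
    fix x y assume h: "\<forall>x y. lt x y \<longrightarrow> Poly_Mapping.lookup f y + (if y < x then 1 else 0) \<le> Poly_Mapping.lookup f x" "lt x y"
    then have "Poly_Mapping.lookup f y + (if y < x then 1 else 0) \<le> Poly_Mapping.lookup f x" by blast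
    then show "Poly_Mapping.lookup f y \<le> Poly_Mapping.lookup f x" by (cases "y < x") auto
  next
    fix x y assume h: "\<forall>x y. lt x y \<longrightarrow> Poly_Mapping.lookup f y + (if y < x then 1 else 0) \<le> Poly_Mapping.lookup f x" "lt x y" "y < x"
    then have "Poly_Mapping.lookup f y + (if y < x then 1 else 0) \<le> Poly_Mapping.lookup f x" by blast
    then show "Poly_Mapping.lookup f y < Poly_Mapping.lookup f x" using h(3) by simp
  qed
  then show ?thesis unfolding A_strict_def A_weak_def by auto
qed

lemma keys_fun: "(\<forall>x. x \<notin> {1..n} \<longrightarrow> Poly_Mapping.lookup f x = 0) \<Longrightarrow> Poly_Mapping.keys f \<subseteq> {1..n}"
  by (auto simp: in_keys_iff)

lemma keys_dl: "Poly_Mapping.keys dl \<subseteq> {1..n}"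
  by (rule keys_fun) (simp add: lookup_dl Mx_def)

lemma dl_strict: "dl \<in> A_strict n lt"
  unfolding A_strict_iff using keys_dl D_lt by (simp add: lookup_dl)

lemma strict_ge: "f \<in> A_strict n lt \<Longrightarrow> D x \<le> Poly_Mapping.lookup f x"
  unfolding A_strict_iff by (intro D_min) auto

lemma plus_weak: "(\<lambda>w. dl + w) ` A_weak n lt \<subseteq> A_strict n lt"
proof clarify
  fix w assume w: "w \<in> A_weak n lt"
  have "Poly_Mapping.keys (dl + w) \<subseteq> Poly_Mapping.keys dl \<union> Poly_Mapping.keys w" by (rule keys_add)
  moreover have "Poly_Mapping.lookup (dl + w) y + (if y < x then 1 else 0) \<le> Poly_Mapping.lookup (dl + w) x"
    if "lt x y" for x y
  proof -
    have "D y + (if y < x then 1 else 0) \<le> D x" using D_lt[OF that] .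
    moreover have "Poly_Mapping.lookup w y \<le> Poly_Mapping.lookup w x" using w that unfolding A_weak_def by blast
    ultimately show ?thesis by (simp add: lookup_add lookup_dl)
  qed
  ultimately show "dl + w \<in> A_strict n lt" using keys_dl w
    unfolding A_strict_iff A_weak_def by auto
qed

lemma LDC_strict_sub: "LDC' \<Longrightarrow> A_strict n lt \<subseteq> (\<lambda>w. dl + w) ` A_weak n lt"
proof
  fix f assume L: LDC' and f: "f \<in> A_strict n lt"
  have ge: "\<And>x. D x \<le> Poly_Mapping.lookup f x" using strict_ge[OF f] .
  have eq: "f = dl + (f - dl)"
    by (rule poly_mapping_eqI) (simp add: lookup_add lookup_minus lookup_dl ge)
  have "f - dl \<in> A_weak n lt"
    unfolding A_weak_def
  proof (intro CollectI conjI allI impI)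
    show "Poly_Mapping.keys (f - dl) \<subseteq> {1..n}" using f unfolding A_strict_iff
      by (auto simp: in_keys_iff lookup_minus)
    fix x y assume "lt x y"
    then show "Poly_Mapping.lookup (f - dl) y \<le> Poly_Mapping.lookup (f - dl) x"
      using LDC_weak[OF L, of "Poly_Mapping.lookup f" x y] f unfolding A_strict_iff
      by (simp add: lookup_minus lookup_dl)
  qed
  then show "f \<in> (\<lambda>w. dl + w) ` A_weak n lt" using eq by blast
qed

lemma strict_sub_LDC:
  assumes S: "A_strict n lt \<subseteq> (\<lambda>w. dl + w) ` A_weak n lt"
  shows LDC'
proof (rule ccontr)
  assume "\<not> LDC'"
  then obtain a b where ab: "covers lt a b" "D b + (if b < a then 1 else 0) < D a"
    using LDC_fail by blast
  then obtain F where F: "\<forall>x. x \<notin> {1..n} \<longrightarrow> F x = 0"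
     "\<forall>x y. lt x y \<longrightarrow> F y + (if y < x then 1 else 0) \<le> F x" "F a \<le> D a" "D b + 1 \<le> F b"
    using F_constr by blast
  have finF: "finite {x. F x \<noteq> 0}" by (rule finite_subset[of _ "{1..n}"]) (use F(1) in auto)
  have lF: "Poly_Mapping.lookup (Abs_poly_mapping F) = F" using finF by simp
  have "Abs_poly_mapping F \<in> A_strict n lt"
  proof -
    have "Poly_Mapping.keys (Abs_poly_mapping F) \<subseteq> {1..n}" by (rule keys_fun) (simp add: lF F(1))
    then show ?thesis unfolding A_strict_iff lF using F(2) by blast
  qed
  then obtain w where w: "w \<in> A_weak n lt" "Abs_poly_mapping F = dl + w" using S by blast
  have Fw: "\<And>x. F x = D x + Poly_Mapping.lookup w x" using arg_cong[OF w(2), of "\<lambda>p. Poly_Mapping.lookup p x" for x]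
    by (simp add: lookup_add lookup_dl lF)
  have "Poly_Mapping.lookup w b \<le> Poly_Mapping.lookup w a" using w(1) ab(1) unfolding A_weak_def covers_def by blast
  then show False using Fw[of a] Fw[of b] F(3,4) by simp
qed

end



context poset begin

lemma I_sub:
  assumes S: "(\<lambda>w. dl + w) ` A_weak n lt \<subseteq> A_strict n lt" and r: "r \<in> R_P n lt"
  shows "xmon dl * r \<in> (I_P n lt :: ((nat \<Rightarrow>\<^sub>0 nat) \<Rightarrow>\<^sub>0 'k::field) set)"
proof -
  have "Poly_Mapping.keys (xmon dl * r) \<subseteq> (\<lambda>k. dl + k) ` Poly_Mapping.keys r" by (rule keys_xmon_mult)
  also have "\<dots> \<subseteq> (\<lambda>k. dl + k) ` A_weak n lt" using r unfolding R_P_def by auto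
  finally show ?thesis using S unfolding I_P_def by auto
qed

lemma I_sup:
  assumes S: "A_strict n lt \<subseteq> (\<lambda>w. dl + w) ` A_weak n lt"
    and p: "p \<in> (I_P n lt :: ((nat \<Rightarrow>\<^sub>0 nat) \<Rightarrow>\<^sub>0 'k::field) set)"
  shows "\<exists>r\<in>R_P n lt. p = xmon dl * r"
proof -
  have kp: "\<And>k. k \<in> Poly_Mapping.keys p \<Longrightarrow> dl + (k - dl) = k \<and> k - dl \<in> A_weak n lt"
  proof -
    fix k assume "k \<in> Poly_Mapping.keys p"
    then have "k \<in> A_strict n lt" using p unfolding I_P_def by auto
    then obtain w where "w \<in> A_weak n lt" "k = dl + w" using S by blast
    then show "dl + (k - dl) = k \<and> k - dl \<in> A_weak n lt" by simp
  qed
  define r where "r = (\<Sum>k\<in>Poly_Mapping.keys p. Poly_Mapping.single (k - dl) (Poly_Mapping.lookup p k))"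
  have "xmon dl * r = (\<Sum>k\<in>Poly_Mapping.keys p. Poly_Mapping.single (dl + (k - dl)) (1 * Poly_Mapping.lookup p k))"
    unfolding r_def xmon_def by (simp add: sum_distrib_left mult_single)
  also have "\<dots> = (\<Sum>k\<in>Poly_Mapping.keys p. Poly_Mapping.single k (Poly_Mapping.lookup p k))"
    by (rule sum.cong) (use kp in auto)
  also have "\<dots> = p" by (rule pm_sum[symmetric])
  finally have e: "p = xmon dl * r" ..
  have "Poly_Mapping.keys r \<subseteq> (\<Union>k\<in>Poly_Mapping.keys p. Poly_Mapping.keys (Poly_Mapping.single (k - dl) (Poly_Mapping.lookup p k)))"
    unfolding r_def by (rule keys_sum)
  also have "\<dots> \<subseteq> A_weak n lt" using kp by auto
  finally have "r \<in> R_P n lt" unfolding R_P_def by simp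
  then show ?thesis using e by blast
qed

lemma zero_weak: "0 \<in> A_weak n lt"
  unfolding A_weak_def by simp

lemma one_R: "(1 :: (nat \<Rightarrow>\<^sub>0 nat) \<Rightarrow>\<^sub>0 'k::field) \<in> R_P n lt"
  unfolding R_P_def using zero_weak by simp

lemma strict_weak: "A_strict n lt \<subseteq> A_weak n lt"
  unfolding A_strict_def by auto

lemma princ_sub:
  assumes pr: "principal_in (R_P n lt :: ((nat \<Rightarrow>\<^sub>0 nat) \<Rightarrow>\<^sub>0 'k::field) set) (I_P n lt)"
  shows "A_strict n lt \<subseteq> (\<lambda>w. dl + w) ` A_weak n lt"
proof -
  obtain g :: "(nat \<Rightarrow>\<^sub>0 nat) \<Rightarrow>\<^sub>0 'k" where g: "g \<in> R_P n lt"
    and I: "I_P n lt = (\<lambda>r. g * r) ` R_P n lt"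
    using pr unfolding principal_in_def by blast
  have gI: "g \<in> I_P n lt" unfolding I using one_R by (intro image_eqI[of _ _ 1]) auto
  have "(xmon dl :: (nat \<Rightarrow>\<^sub>0 nat) \<Rightarrow>\<^sub>0 'k) \<in> I_P n lt"
    unfolding I_P_def using dl_strict by (simp add: keys_xmon)
  then obtain r where r: "r \<in> R_P n lt" "xmon dl = g * r" unfolding I by blast
  have nz: "g \<noteq> 0" "r \<noteq> 0" using r(2) keys_xmon[of dl, where 'k='k] by auto
  define a where "a = Max (Poly_Mapping.keys g)"
  define b where "b = Max (Poly_Mapping.keys r)"
  have aG: "a \<in> Poly_Mapping.keys g" and bH: "b \<in> Poly_Mapping.keys r"
    unfolding a_def b_def using nz by (auto intro!: Max_in)
  have "Poly_Mapping.lookup (g * r) (a + b) \<noteq> 0"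
    unfolding a_def b_def max_coeff[OF nz] using aG bH by (simp add: a_def b_def in_keys_iff)
  then have "a + b \<in> Poly_Mapping.keys (xmon dl :: (nat \<Rightarrow>\<^sub>0 nat) \<Rightarrow>\<^sub>0 'k)"
    unfolding r(2) by (simp add: in_keys_iff)
  then have ab: "a + b = dl" by (simp add: keys_xmon)
  have aS: "a \<in> A_strict n lt" using aG gI unfolding I_P_def by auto
  have adl: "a = dl"
  proof (rule poly_mapping_eqI)
    fix i
    have "D i \<le> Poly_Mapping.lookup a i" by (rule strict_ge[OF aS])
    moreover have "Poly_Mapping.lookup a i + Poly_Mapping.lookup b i = D i"
      using arg_cong[OF ab, of "\<lambda>p. Poly_Mapping.lookup p i"] by (simp add: lookup_add lookup_dl)
    ultimately show "Poly_Mapping.lookup a i = Poly_Mapping.lookup dl i" by (simp add: lookup_dl)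
  qed
  have kg: "Poly_Mapping.keys g \<subseteq> {dl}"
  proof
    fix p assume pG: "p \<in> Poly_Mapping.keys g"
    have "p \<le> a" unfolding a_def using pG by (intro Max_ge) auto
    moreover have "dl \<le> p"
    proof (rule pw_le_lex)
      fix i have "p \<in> A_strict n lt" using pG gI unfolding I_P_def by auto
      then show "Poly_Mapping.lookup dl i \<le> Poly_Mapping.lookup p i" using strict_ge by (simp add: lookup_dl)
    qed
    ultimately show "p \<in> {dl}" using adl by simp
  qed
  show ?thesis
  proof
    fix f assume f: "f \<in> A_strict n lt"
    have "(xmon f :: (nat \<Rightarrow>\<^sub>0 nat) \<Rightarrow>\<^sub>0 'k) \<in> I_P n lt"
      unfolding I_P_def using f by (simp add: keys_xmon)
    then obtain r' where r': "r' \<in> R_P n lt" "xmon f = g * r'" unfolding I by blast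
    have "f \<in> Poly_Mapping.keys (g * r')" using r'(2) keys_xmon[of f, where 'k='k] by simp
    also have "\<dots> \<subseteq> {a + b |a b. a \<in> Poly_Mapping.keys g \<and> b \<in> Poly_Mapping.keys r'}" by (rule keys_mult)
    finally obtain c where "c \<in> Poly_Mapping.keys r'" "f = dl + c" using kg by auto
    then show "f \<in> (\<lambda>w. dl + w) ` A_weak n lt" using r'(1) unfolding R_P_def by auto
  qed
qed

end

theorem proposition9p5:
  fixes n :: nat and lt :: "nat \<Rightarrow> nat \<Rightarrow> bool"
  assumes "is_poset n lt"
  shows "(principal_in (R_P n lt :: ((nat \<Rightarrow>\<^sub>0 nat) \<Rightarrow>\<^sub>0 'k::field) set) (I_P n lt)
           \<longleftrightarrow> labelled_delta_chain n lt)
       \<and> (labelled_delta_chain n lt \<longrightarrow>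
           (I_P n lt :: ((nat \<Rightarrow>\<^sub>0 nat) \<Rightarrow>\<^sub>0 'k::field) set)
             = (\<lambda>r. xmon (delta_pm n lt) * r) ` R_P n lt
           \<and> delta_pm n lt \<in> A_strict n lt
           \<and> (\<lambda>g. delta_pm n lt + g) ` A_weak n lt = A_strict n lt)"
proof -
  interpret poset n lt by (rule poset.intro) (rule assms)
  have L: "labelled_delta_chain n lt \<longleftrightarrow> LDC'" by (rule LDC_eq)
  have eqA: "LDC' \<Longrightarrow> (\<lambda>g. dl + g) ` A_weak n lt = A_strict n lt"
    using plus_weak LDC_strict_sub by blast
  have eqI: "(I_P n lt :: ((nat \<Rightarrow>\<^sub>0 nat) \<Rightarrow>\<^sub>0 'k::field) set) = (\<lambda>r. xmon dl * r) ` R_P n lt"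
    if LD: LDC'
  proof
    show "(I_P n lt :: ((nat \<Rightarrow>\<^sub>0 nat) \<Rightarrow>\<^sub>0 'k::field) set) \<subseteq> (\<lambda>r. xmon dl * r) ` R_P n lt"
      using I_sup[OF LDC_strict_sub[OF LD]] by blast
    show "(\<lambda>r. xmon dl * r) ` R_P n lt \<subseteq> (I_P n lt :: ((nat \<Rightarrow>\<^sub>0 nat) \<Rightarrow>\<^sub>0 'k::field) set)"
      using I_sub[OF plus_weak] by blast
  qed
  have fwd: "principal_in (R_P n lt :: ((nat \<Rightarrow>\<^sub>0 nat) \<Rightarrow>\<^sub>0 'k::field) set) (I_P n lt) \<Longrightarrow> LDC'"
    by (rule strict_sub_LDC[OF princ_sub])
  have bwd: "principal_in (R_P n lt :: ((nat \<Rightarrow>\<^sub>0 nat) \<Rightarrow>\<^sub>0 'k::field) set) (I_P n lt)" if LD: LDC'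
  proof -
    have "(xmon dl :: (nat \<Rightarrow>\<^sub>0 nat) \<Rightarrow>\<^sub>0 'k) \<in> R_P n lt"
      unfolding R_P_def using dl_strict strict_weak by (auto simp: keys_xmon)
    then show ?thesis unfolding principal_in_def using eqI[OF LD] by blast
  qed
  show ?thesis using L fwd bwd eqI eqA dl_strict by blast
qed

end
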